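(* For every $n\geq 1$, $s_n\equiv t_n \pmod 2$.
   Context: Rectangulations are combinatorial equivalence classes of tilings of the unit square by axis-parallel rectangles, where two tilings are equivalent if a homeomorphism of the square fixing the four corners and preserving horizontality and verticality of segments takes one to the other. $t_n$ is the number of rectangulations with exactly $n$ tiles, and $s_n$ is the number of rectangulations with exactly $n$ tiles that are fixed by the natural action of the dihedral group $D_8$ of symmetries of the square. *)

theory Defs
  imports "HOL-Analysis.Analysis"
begin

type_synonym pt = "real \<times> real"

definition unit_sq :: "pt set" where
  "unit_sq = {0..1} \<times> {0..1}"

definition is_rect :: "pt set \<Rightarrow> bool" where
  "is_rect R \<longleftrightarrow> (\<exists>a b c d. a < b \<and> c < d \<and> R = {a..b} \<times> {c..d})"

definition is_tiling :: "nat \<Rightarrow> pt set set \<Rightarrow> bool" where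
  "is_tiling n T \<longleftrightarrow> finite T \<and> card T = n \<and> (\<forall>R\<in>T. is_rect R) \<and>
     \<Union>T = unit_sq \<and>
     (\<forall>R\<in>T. \<forall>R'\<in>T. R \<noteq> R' \<longrightarrow> interior R \<inter> interior R' = {})"

definition tilings :: "nat \<Rightarrow> pt set set set" where
  "tilings n = {T. is_tiling n T}"

definition skel :: "pt set set \<Rightarrow> pt set" where
  "skel T = (\<Union>R\<in>T. frontier R)"

definition hseg :: "pt set \<Rightarrow> bool" where
  "hseg S \<longleftrightarrow> (\<exists>a b y. a < b \<and> S = {a..b} \<times> {y})"

definition vseg :: "pt set \<Rightarrow> bool" where
  "vseg S \<longleftrightarrow> (\<exists>x c d. c < d \<and> S = {x} \<times> {c..d})"

definition preserves_HV :: "(pt \<Rightarrow> pt) \<Rightarrow> pt set \<Rightarrow> bool" where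
  "preserves_HV h K \<longleftrightarrow> (\<forall>S. S \<subseteq> K \<longrightarrow>
      (hseg S \<longrightarrow> hseg (h ` S)) \<and> (vseg S \<longrightarrow> vseg (h ` S)))"

definition corners :: "pt set" where
  "corners = {(0,0), (1,0), (0,1), (1,1)}"

definition comb_equiv :: "(pt set set \<times> pt set set) set" where
  "comb_equiv = {(T, T'). \<exists>h g. homeomorphism unit_sq unit_sq h g \<and>
      (\<forall>p\<in>corners. h p = p) \<and> (\<lambda>R. h ` R) ` T = T' \<and>
      preserves_HV h (skel T) \<and> preserves_HV g (skel T')}"

definition rectangulations :: "nat \<Rightarrow> pt set set set set" where
  "rectangulations n = tilings n // comb_equiv"

definition t :: "nat \<Rightarrow> nat" where
  "t n = card (rectangulations n)"

definition D8 :: "(pt \<Rightarrow> pt) set" where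
  "D8 = {\<lambda>(x,y). (x,y), \<lambda>(x,y). (1-x,y), \<lambda>(x,y). (x,1-y), \<lambda>(x,y). (1-x,1-y),
         \<lambda>(x,y). (y,x), \<lambda>(x,y). (1-y,x), \<lambda>(x,y). (y,1-x), \<lambda>(x,y). (1-y,1-x)}"

definition act :: "(pt \<Rightarrow> pt) \<Rightarrow> pt set set \<Rightarrow> pt set set" where
  "act \<sigma> T = (\<lambda>R. \<sigma> ` R) ` T"

definition s :: "nat \<Rightarrow> nat" where
  "s n = card {C \<in> rectangulations n. \<forall>\<sigma>\<in>D8. \<forall>T\<in>C. act \<sigma> T \<in> C}"

end

theory Submission
  imports Defs
begin

lemma homeo_interior:
  assumes H: "homeomorphism unit_sq unit_sq h g" and R: "R \<subseteq> unit_sq"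
  shows "interior (h ` R) = h ` interior R"
proof -
  have Hd: "(\<forall>x\<in>unit_sq. g (h x) = x)" "h ` unit_sq = unit_sq" "continuous_on unit_sq h"
     "(\<forall>y\<in>unit_sq. h (g y) = y)" "g ` unit_sq = unit_sq" "continuous_on unit_sq g"
    using H unfolding homeomorphism_def by auto
  have hcont: "continuous_on R h" using Hd(3) R by (rule continuous_on_subset)
  have hinj: "inj_on h R" by (rule inj_on_inverseI[where g=g]) (use Hd(1) R in blast)
  have hR: "h ` R \<subseteq> unit_sq" using Hd(2) R by blast
  have gcont: "continuous_on (h ` R) g" using Hd(6) hR by (rule continuous_on_subset)
  have ginj: "inj_on g (h ` R)" by (rule inj_on_inverseI[where g=h]) (use Hd(4) hR in blast)
  have ghR: "g ` h ` R = R"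
  proof -
    have "\<forall>x\<in>R. g (h x) = x" using Hd(1) R by blast
    then show ?thesis by (simp add: image_comp cong: image_cong)
  qed
  have 1: "h ` interior R \<subseteq> interior (h ` R)"
    using continuous_image_subset_interior[OF hcont hinj] by auto
  have 2: "g ` interior (h ` R) \<subseteq> interior R"
    using continuous_image_subset_interior[OF gcont ginj] ghR by auto
  have "interior (h ` R) \<subseteq> h ` interior R"
  proof
    fix x assume x: "x \<in> interior (h ` R)"
    then have "x \<in> unit_sq" using hR interior_subset by blast
    then have "x = h (g x)" using Hd(4) by auto
    moreover have "g x \<in> interior R" using 2 x by blast
    ultimately show "x \<in> h ` interior R" by blast
  qed
  with 1 show ?thesis by blast
qed

lemma homeo_frontier:
  assumes H: "homeomorphism unit_sq unit_sq h g" and R: "R \<subseteq> unit_sq" and C: "compact R"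
  shows "frontier (h ` R) = h ` frontier R"
proof -
  have hcont: "continuous_on R h" using H R by (meson continuous_on_subset homeomorphism_cont1)
  have hinj: "inj_on h R" by (rule inj_on_inverseI[where g=g]) (use H R in \<open>auto simp: homeomorphism_def\<close>)
  have "compact (h ` R)" using compact_continuous_image[OF hcont C] .
  then have "closure (h ` R) = h ` R" by (simp add: compact_imp_closed)
  moreover have "closure R = R" using C by (simp add: compact_imp_closed)
  ultimately show ?thesis unfolding frontier_def homeo_interior[OF H R]
    using inj_on_image_set_diff[OF hinj _ interior_subset[of R]] by simp
qed

definition Adom :: "pt set set set" where
  "Adom = {T. \<forall>R\<in>T. R \<subseteq> unit_sq \<and> compact R}"

lemma skel_act:
  assumes H: "homeomorphism unit_sq unit_sq h g" and T: "T \<in> Adom"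
  shows "skel (act h T) = h ` skel T"
  using homeo_frontier[OF H] T unfolding skel_def act_def Adom_def by auto

lemma act_Adom:
  assumes H: "homeomorphism unit_sq unit_sq h g" and T: "T \<in> Adom"
  shows "act h T \<in> Adom"
proof -
  have "h ` R \<subseteq> unit_sq \<and> compact (h ` R)" if "R \<in> T" for R
  proof -
    have R: "R \<subseteq> unit_sq" "compact R" using T that unfolding Adom_def by auto
    have "continuous_on R h" using H R by (meson continuous_on_subset homeomorphism_cont1)
    then show ?thesis using R H compact_continuous_image unfolding homeomorphism_def by blast
  qed
  then show ?thesis unfolding Adom_def act_def by auto
qed

lemma comb_equivE:
  assumes "(T, T') \<in> comb_equiv"
  obtains h g where "homeomorphism unit_sq unit_sq h g" "\<forall>p\<in>corners. h p = p"
    "T' = act h T" "preserves_HV h (skel T)" "preserves_HV g (skel T')"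
  using assms unfolding comb_equiv_def act_def by auto

lemma comb_equivI:
  assumes "homeomorphism unit_sq unit_sq h g" "\<forall>p\<in>corners. h p = p"
    "T' = act h T" "preserves_HV h (skel T)" "preserves_HV g (skel T')"
  shows "(T, T') \<in> comb_equiv"
  using assms unfolding comb_equiv_def act_def by auto

lemma equiv_refl: "(T, T) \<in> comb_equiv"
  by (rule comb_equivI[where h="\<lambda>a. a" and g="\<lambda>a. a"])
     (auto simp: homeomorphism_ident act_def preserves_HV_def)

lemma equiv_Adom: "T \<in> Adom \<Longrightarrow> (T, T') \<in> comb_equiv \<Longrightarrow> T' \<in> Adom"
  by (metis comb_equivE act_Adom)

lemma corners_sq: "corners \<subseteq> unit_sq"
  by (auto simp: corners_def unit_sq_def)

lemma act_back:
  assumes H: "homeomorphism unit_sq unit_sq h g" and T: "T \<in> Adom"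
  shows "act g (act h T) = T"
proof -
  have "g ` h ` R = R" if "R \<in> T" for R
  proof -
    have "\<forall>x\<in>R. g (h x) = x" using H T that unfolding Adom_def homeomorphism_def by blast
    then show ?thesis by (simp add: image_comp cong: image_cong)
  qed
  then show ?thesis unfolding act_def by (simp add: image_comp cong: image_cong)
qed

lemma equiv_sym:
  assumes T: "T \<in> Adom" and E: "(T, T') \<in> comb_equiv"
  shows "(T', T) \<in> comb_equiv"
proof -
  obtain h g where H: "homeomorphism unit_sq unit_sq h g" "\<forall>p\<in>corners. h p = p"
    "T' = act h T" "preserves_HV h (skel T)" "preserves_HV g (skel T')"
    using E by (rule comb_equivE)
  show ?thesis
  proof (rule comb_equivI[where h=g and g=h])
    show "homeomorphism unit_sq unit_sq g h" using H(1) by (rule homeomorphism_symD)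
    show "\<forall>p\<in>corners. g p = p"
    proof
      fix p assume p: "p \<in> corners"
      then have "g (h p) = p" using H(1) corners_sq unfolding homeomorphism_def by blast
      then show "g p = p" using H(2) p by simp
    qed
    show "T = act g T'" using act_back[OF H(1) T] H(3) by simp
  qed (use H in auto)
qed

lemma equiv_trans:
  assumes T: "T \<in> Adom" and E1: "(T, T') \<in> comb_equiv" and E2: "(T', T'') \<in> comb_equiv"
  shows "(T, T'') \<in> comb_equiv"
proof -
  obtain h g where H: "homeomorphism unit_sq unit_sq h g" "\<forall>p\<in>corners. h p = p"
    "T' = act h T" "preserves_HV h (skel T)" "preserves_HV g (skel T')"
    using E1 by (rule comb_equivE)
  obtain h' g' where H': "homeomorphism unit_sq unit_sq h' g'" "\<forall>p\<in>corners. h' p = p"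
    "T'' = act h' T'" "preserves_HV h' (skel T')" "preserves_HV g' (skel T'')"
    using E2 by (rule comb_equivE)
  have T': "T' \<in> Adom" using equiv_Adom[OF T E1] .
  have T'': "T'' \<in> Adom" using equiv_Adom[OF T' E2] .
  have s1: "h ` skel T = skel T'" using skel_act[OF H(1) T] H(3) by simp
  have s2: "g' ` skel T'' = skel T'"
    using skel_act[OF homeomorphism_symD[OF H'(1)] T''] act_back[OF H'(1) T'] H'(3) by simp
  show ?thesis
  proof (rule comb_equivI[where h="h' \<circ> h" and g="g \<circ> g'"])
    show "homeomorphism unit_sq unit_sq (h' \<circ> h) (g \<circ> g')"
      using homeomorphism_compose[OF H(1) H'(1)] .
    show "\<forall>p\<in>corners. (h' \<circ> h) p = p" using H(2) H'(2) by simp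
    show "T'' = act (h' \<circ> h) T" using H(3) H'(3) unfolding act_def by (simp add: image_comp)
    show "preserves_HV (h' \<circ> h) (skel T)"
      unfolding preserves_HV_def
    proof (intro allI impI)
      fix S assume S: "S \<subseteq> skel T"
      have hS: "h ` S \<subseteq> skel T'" using s1 S by blast
      have e: "(h' \<circ> h) ` S = h' ` h ` S" by (rule image_comp[symmetric])
      have a: "hseg S \<longrightarrow> hseg (h ` S)" "vseg S \<longrightarrow> vseg (h ` S)"
        using H(4) S unfolding preserves_HV_def by blast+
      have b: "hseg (h ` S) \<longrightarrow> hseg (h' ` h ` S)" "vseg (h ` S) \<longrightarrow> vseg (h' ` h ` S)"
        using H'(4) hS unfolding preserves_HV_def by blast+
      show "(hseg S \<longrightarrow> hseg ((h' \<circ> h) ` S)) \<and> (vseg S \<longrightarrow> vseg ((h' \<circ> h) ` S))"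
        unfolding e using a b by blast
    qed
    show "preserves_HV (g \<circ> g') (skel T'')"
      unfolding preserves_HV_def
    proof (intro allI impI)
      fix S assume S: "S \<subseteq> skel T''"
      have hS: "g' ` S \<subseteq> skel T'" using s2 S by blast
      have e: "(g \<circ> g') ` S = g ` g' ` S" by (rule image_comp[symmetric])
      have a: "hseg S \<longrightarrow> hseg (g' ` S)" "vseg S \<longrightarrow> vseg (g' ` S)"
        using H'(5) S unfolding preserves_HV_def by blast+
      have b: "hseg (g' ` S) \<longrightarrow> hseg (g ` g' ` S)" "vseg (g' ` S) \<longrightarrow> vseg (g ` g' ` S)"
        using H(5) hS unfolding preserves_HV_def by blast+
      show "(hseg S \<longrightarrow> hseg ((g \<circ> g') ` S)) \<and> (vseg S \<longrightarrow> vseg ((g \<circ> g') ` S))"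
        unfolding e using a b by blast
    qed
  qed
qed

lemma class_eq:
  assumes T: "T \<in> Adom" and E: "(T, T') \<in> comb_equiv"
  shows "comb_equiv `` {T} = comb_equiv `` {T'}"
proof
  show "comb_equiv `` {T} \<subseteq> comb_equiv `` {T'}"
    using equiv_trans[OF equiv_Adom[OF T E] equiv_sym[OF T E]] by auto
  show "comb_equiv `` {T'} \<subseteq> comb_equiv `` {T}"
    using equiv_trans[OF T E] by auto
qed

lemma rect_sq: "is_tiling n T \<Longrightarrow> R \<in> T \<Longrightarrow> R \<subseteq> unit_sq"
  unfolding is_tiling_def by blast

lemma tiling_Adom: "is_tiling n T \<Longrightarrow> T \<in> Adom"
  unfolding Adom_def is_tiling_def is_rect_def by (auto intro!: compact_Times)

lemma act_tiling:
  assumes H: "homeomorphism unit_sq unit_sq h g"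
    and rect: "\<And>R. R \<subseteq> unit_sq \<Longrightarrow> is_rect R \<Longrightarrow> is_rect (h ` R)"
    and T: "is_tiling n T"
  shows "is_tiling n (act h T)"
proof -
  have Hd: "(\<forall>x\<in>unit_sq. g (h x) = x)" "h ` unit_sq = unit_sq"
    using H unfolding homeomorphism_def by auto
  have hinj: "inj_on h unit_sq" by (rule inj_on_inverseI[where g=g]) (use Hd(1) in blast)
  have sub: "\<And>R. R \<in> T \<Longrightarrow> R \<subseteq> unit_sq" using rect_sq[OF T] .
  have inj: "inj_on (\<lambda>R. h ` R) T"
  proof (rule inj_onI)
    fix R R' assume "R \<in> T" "R' \<in> T" "h ` R = h ` R'"
    then show "R = R'" using inj_on_image_eq_iff[OF hinj sub sub] by blast
  qed
  have fin: "finite T" "card T = n" "\<forall>R\<in>T. is_rect R" "\<Union>T = unit_sq"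
    and dis: "\<forall>R\<in>T. \<forall>R'\<in>T. R \<noteq> R' \<longrightarrow> interior R \<inter> interior R' = {}"
    using T unfolding is_tiling_def by auto
  show ?thesis unfolding is_tiling_def act_def
  proof (intro conjI ballI impI)
    show "finite ((\<lambda>R. h ` R) ` T)" using fin by simp
    show "card ((\<lambda>R. h ` R) ` T) = n" using card_image[OF inj] fin by simp
    show "is_rect R'" if "R' \<in> (\<lambda>R. h ` R) ` T" for R' using that rect sub fin(3) by auto
    show "\<Union>((\<lambda>R. h ` R) ` T) = unit_sq" using fin(4) Hd(2) image_Union[of h T] by simp
    fix A B assume A: "A \<in> (\<lambda>R. h ` R) ` T" and B: "B \<in> (\<lambda>R. h ` R) ` T" and AB: "A \<noteq> B"
    obtain R where R: "R \<in> T" "A = h ` R" using A by blast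
    obtain R' where R': "R' \<in> T" "B = h ` R'" using B by blast
    have "R \<noteq> R'" using AB R R' by blast
    then have "interior R \<inter> interior R' = {}" using dis R R' by blast
    moreover have "interior A = h ` interior R" using homeo_interior[OF H sub[OF R(1)]] R by simp
    moreover have "interior B = h ` interior R'" using homeo_interior[OF H sub[OF R'(1)]] R' by simp
    moreover have "h ` interior R \<inter> h ` interior R' = h ` (interior R \<inter> interior R')"
      using inj_on_image_Int[OF hinj] sub R R' interior_subset by (metis order_trans)
    ultimately show "interior A \<inter> interior B = {}" by simp
  qed
qed

definition r1 :: "pt \<Rightarrow> pt" where "r1 = (\<lambda>(x,y). (1-x,y))"
definition r2 :: "pt \<Rightarrow> pt" where "r2 = (\<lambda>(x,y). (y,x))"
definition r3 :: "pt \<Rightarrow> pt" where "r3 = (\<lambda>(x,y). (x,1-y))"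

lemma inv_image_eq:
  assumes "\<And>x. r (r x) = x" "r ` A \<subseteq> B" "r ` B \<subseteq> A"
  shows "r ` A = B"
proof -
  have "B = r ` r ` B" using assms(1) by (simp add: image_comp)
  then show ?thesis using assms by blast
qed

lemma r1r: "r1 (r1 p) = p" by (cases p) (simp add: r1_def)
lemma r2r: "r2 (r2 p) = p" by (cases p) (simp add: r2_def)
lemma r3r: "r3 (r3 p) = p" by (cases p) (simp add: r3_def)

lemma r1_rect: "r1 ` ({a..b} \<times> {c..d}) = {1-b..1-a} \<times> {c..d}"
  by (rule inv_image_eq) (auto simp: r1r r1_def)
lemma r2_rect: "r2 ` ({a..b} \<times> {c..d}) = {c..d} \<times> {a..b}"
  by (rule inv_image_eq) (auto simp: r2r r2_def)
lemma r3_rect: "r3 ` ({a..b} \<times> {c..d}) = {a..b} \<times> {1-d..1-c}"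
  by (rule inv_image_eq) (auto simp: r3r r3_def)

lemma sq_eq: "unit_sq = {0..1} \<times> {0..1}" by (simp add: unit_sq_def)

lemma r1_homeo: "homeomorphism unit_sq unit_sq r1 r1"
proof -
  have c: "continuous_on UNIV r1" unfolding r1_def case_prod_beta by (intro continuous_intros)
  have "r1 ` unit_sq = unit_sq" unfolding sq_eq r1_rect by simp
  then show ?thesis unfolding homeomorphism_def using c continuous_on_subset r1r by blast
qed
lemma r2_homeo: "homeomorphism unit_sq unit_sq r2 r2"
proof -
  have c: "continuous_on UNIV r2" unfolding r2_def case_prod_beta by (intro continuous_intros)
  have "r2 ` unit_sq = unit_sq" unfolding sq_eq r2_rect by simp
  then show ?thesis unfolding homeomorphism_def using c continuous_on_subset r2r by blast
qed
lemma r3_homeo: "homeomorphism unit_sq unit_sq r3 r3"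
proof -
  have c: "continuous_on UNIV r3" unfolding r3_def case_prod_beta by (intro continuous_intros)
  have "r3 ` unit_sq = unit_sq" unfolding sq_eq r3_rect by simp
  then show ?thesis unfolding homeomorphism_def using c continuous_on_subset r3r by blast
qed

lemma is_rectI: "a < b \<Longrightarrow> c < d \<Longrightarrow> is_rect ({a..b} \<times> {c..d})"
  unfolding is_rect_def by blast
lemma hsegI: "a < b \<Longrightarrow> hseg ({a..b} \<times> {y})"
  unfolding hseg_def by blast
lemma vsegI: "c < d \<Longrightarrow> vseg ({x} \<times> {c..d})"
  unfolding vseg_def by blast

lemma r1_isrect: "is_rect R \<Longrightarrow> is_rect (r1 ` R)"
  unfolding is_rect_def[of R] by (auto simp: r1_rect intro!: is_rectI)
lemma r2_isrect: "is_rect R \<Longrightarrow> is_rect (r2 ` R)"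
  unfolding is_rect_def[of R] by (auto simp: r2_rect intro!: is_rectI)
lemma r3_isrect: "is_rect R \<Longrightarrow> is_rect (r3 ` R)"
  unfolding is_rect_def[of R] by (auto simp: r3_rect intro!: is_rectI)

lemma hsegE: "hseg S \<Longrightarrow> (\<And>a b y. a < b \<Longrightarrow> S = {a..b} \<times> {y} \<Longrightarrow> P) \<Longrightarrow> P"
  unfolding hseg_def by blast
lemma vsegE: "vseg S \<Longrightarrow> (\<And>x c d. c < d \<Longrightarrow> S = {x} \<times> {c..d} \<Longrightarrow> P) \<Longrightarrow> P"
  unfolding vseg_def by blast

lemma seg_r1: "(\<forall>S. hseg S \<longrightarrow> hseg (r1 ` S)) \<and> (\<forall>S. vseg S \<longrightarrow> vseg (r1 ` S))"
proof (intro conjI allI impI)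
  fix S assume "hseg S" then show "hseg (r1 ` S)"
    by (rule hsegE) (simp add: r1_rect[where c=y and d=y for y, simplified] hsegI)
next
  fix S assume "vseg S" then show "vseg (r1 ` S)"
    by (rule vsegE) (simp add: r1_rect[where a=x and b=x for x, simplified] vsegI)
qed
lemma seg_r3: "(\<forall>S. hseg S \<longrightarrow> hseg (r3 ` S)) \<and> (\<forall>S. vseg S \<longrightarrow> vseg (r3 ` S))"
proof (intro conjI allI impI)
  fix S assume "hseg S" then show "hseg (r3 ` S)"
    by (rule hsegE) (simp add: r3_rect[where c=y and d=y for y, simplified] hsegI)
next
  fix S assume "vseg S" then show "vseg (r3 ` S)"
    by (rule vsegE) (simp add: r3_rect[where a=x and b=x for x, simplified] vsegI)
qed
lemma seg_r2: "(\<forall>S. hseg S \<longrightarrow> vseg (r2 ` S)) \<and> (\<forall>S. vseg S \<longrightarrow> hseg (r2 ` S))"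
proof (intro conjI allI impI)
  fix S assume "hseg S" then show "vseg (r2 ` S)"
    by (rule hsegE) (simp add: r2_rect[where c=y and d=y for y, simplified] vsegI)
next
  fix S assume "vseg S" then show "hseg (r2 ` S)"
    by (rule vsegE) (simp add: r2_rect[where a=x and b=x for x, simplified] hsegI)
qed

lemma corners_r1: "p \<in> corners \<Longrightarrow> r1 p \<in> corners" by (auto simp: corners_def r1_def)
lemma corners_r2: "p \<in> corners \<Longrightarrow> r2 p \<in> corners" by (auto simp: corners_def r2_def)
lemma corners_r3: "p \<in> corners \<Longrightarrow> r3 p \<in> corners" by (auto simp: corners_def r3_def)

definition gen :: "(pt \<Rightarrow> pt) \<Rightarrow> bool" where
  "gen r \<longleftrightarrow> (\<forall>p. r (r p) = p) \<and> homeomorphism unit_sq unit_sq r r \<and>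
     (\<forall>p\<in>corners. r p \<in> corners) \<and> (\<forall>R. is_rect R \<longrightarrow> is_rect (r ` R)) \<and>
     ((\<forall>S. hseg S \<longrightarrow> hseg (r ` S)) \<and> (\<forall>S. vseg S \<longrightarrow> vseg (r ` S)) \<or>
      (\<forall>S. hseg S \<longrightarrow> vseg (r ` S)) \<and> (\<forall>S. vseg S \<longrightarrow> hseg (r ` S)))"

lemma gen_r1: "gen r1" unfolding gen_def using r1r r1_homeo corners_r1 r1_isrect seg_r1 by blast
lemma gen_r2: "gen r2" unfolding gen_def using r2r r2_homeo corners_r2 r2_isrect seg_r2 by blast
lemma gen_r3: "gen r3" unfolding gen_def using r3r r3_homeo corners_r3 r3_isrect seg_r3 by blast

lemma conj_pres:
  assumes G: "gen r" and P: "preserves_HV h K"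
  shows "preserves_HV (r \<circ> (h \<circ> r)) (r ` K)"
  unfolding preserves_HV_def
proof (intro allI impI)
  fix S assume S: "S \<subseteq> r ` K"
  have rr: "\<And>p. r (r p) = p" using G unfolding gen_def by blast
  have rS: "r ` S \<subseteq> K" using S rr by force
  have e: "(r \<circ> (h \<circ> r)) ` S = r ` h ` r ` S" by (simp add: image_comp)
  have PH: "hseg (r ` S) \<longrightarrow> hseg (h ` r ` S)" "vseg (r ` S) \<longrightarrow> vseg (h ` r ` S)"
    using P rS unfolding preserves_HV_def by blast+
  have sg: "(\<forall>S. hseg S \<longrightarrow> hseg (r ` S)) \<and> (\<forall>S. vseg S \<longrightarrow> vseg (r ` S)) \<or>
      (\<forall>S. hseg S \<longrightarrow> vseg (r ` S)) \<and> (\<forall>S. vseg S \<longrightarrow> hseg (r ` S))"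
    using G unfolding gen_def by blast
  show "(hseg S \<longrightarrow> hseg ((r \<circ> (h \<circ> r)) ` S)) \<and> (vseg S \<longrightarrow> vseg ((r \<circ> (h \<circ> r)) ` S))"
    unfolding e using sg PH by blast
qed

lemma act_equiv:
  assumes G: "gen r" and T: "T \<in> Adom" and E: "(T, T') \<in> comb_equiv"
  shows "(act r T, act r T') \<in> comb_equiv"
proof -
  have rr: "\<And>p. r (r p) = p" and Hr: "homeomorphism unit_sq unit_sq r r"
    and cr: "\<And>p. p \<in> corners \<Longrightarrow> r p \<in> corners" using G unfolding gen_def by blast+
  obtain h g where H: "homeomorphism unit_sq unit_sq h g" "\<forall>p\<in>corners. h p = p"
    "T' = act h T" "preserves_HV h (skel T)" "preserves_HV g (skel T')"
    using E by (rule comb_equivE)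
  have T': "T' \<in> Adom" using equiv_Adom[OF T E] .
  show ?thesis
  proof (rule comb_equivI[where h="r \<circ> (h \<circ> r)" and g="r \<circ> (g \<circ> r)"])
    show "homeomorphism unit_sq unit_sq (r \<circ> (h \<circ> r)) (r \<circ> (g \<circ> r))"
      using homeomorphism_compose[OF homeomorphism_compose[OF Hr H(1)] Hr] by (simp add: o_assoc)
    show "\<forall>p\<in>corners. (r \<circ> (h \<circ> r)) p = p" using H(2) cr rr by simp
    show "act r T' = act (r \<circ> (h \<circ> r)) (act r T)"
      using H(3) rr unfolding act_def by (simp add: image_image)
    show "preserves_HV (r \<circ> (h \<circ> r)) (skel (act r T))"
      using skel_act[OF Hr T] conj_pres[OF G H(4)] by simp
    show "preserves_HV (r \<circ> (g \<circ> r)) (skel (act r T'))"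
      using skel_act[OF Hr T'] conj_pres[OF G H(5)] by simp
  qed
qed

lemma gen_tiling: "gen r \<Longrightarrow> is_tiling n T \<Longrightarrow> is_tiling n (act r T)"
  by (rule act_tiling[where g=r]) (auto simp: gen_def)

lemma act_act: "act a (act b T) = act (\<lambda>p. a (b p)) T"
  unfolding act_def by (simp add: image_image)

lemma ball8: "(\<forall>x\<in>insert a A. P x) \<longleftrightarrow> P a \<and> (\<forall>x\<in>A. P x)" by auto

lemma act_id: "act (\<lambda>p. p) T = T" unfolding act_def by simp

lemma gen_invol: assumes "gen r" shows "act r (act r T) = T"
proof -
  have "(\<lambda>p. r (r p)) = (\<lambda>p. p)" using assms unfolding gen_def by auto
  then have "act r (act r T) = act (\<lambda>p. p) T" unfolding act_act by simp
  then show ?thesis by (simp only: act_id)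
qed

definition cls :: "pt set set \<Rightarrow> pt set set set" where "cls T = comb_equiv `` {T}"
definition rep :: "nat \<Rightarrow> pt set set set \<Rightarrow> pt set set" where
  "rep n C = (SOME T. is_tiling n T \<and> C = cls T)"
definition phi :: "nat \<Rightarrow> (pt \<Rightarrow> pt) \<Rightarrow> pt set set set \<Rightarrow> pt set set set" where
  "phi n r C = cls (act r (rep n C))"

lemma rect_eq: "rectangulations n = cls ` {T. is_tiling n T}"
  unfolding rectangulations_def quotient_def tilings_def cls_def by auto

lemma rep: assumes "C \<in> rectangulations n" shows "is_tiling n (rep n C)" "C = cls (rep n C)"
proof -
  have "\<exists>T. is_tiling n T \<and> C = cls T" using assms rect_eq by auto
  then have "is_tiling n (rep n C) \<and> C = cls (rep n C)" unfolding rep_def by (rule someI_ex)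
  then show "is_tiling n (rep n C)" "C = cls (rep n C)" by auto
qed

lemma cls_mem: "T \<in> cls T" unfolding cls_def using equiv_refl by auto

lemma cls_eq: "T \<in> Adom \<Longrightarrow> (T, T') \<in> comb_equiv \<Longrightarrow> cls T = cls T'"
  unfolding cls_def by (rule class_eq)

lemma phi_cls:
  assumes G: "gen r" and T: "is_tiling n T"
  shows "phi n r (cls T) = cls (act r T)"
proof -
  have C: "cls T \<in> rectangulations n" using rect_eq T by auto
  let ?T0 = "rep n (cls T)"
  have T0: "is_tiling n ?T0" "cls T = cls ?T0" using rep[OF C] by auto
  have "(?T0, T) \<in> comb_equiv" using T0(2) cls_mem[of T] unfolding cls_def by auto
  then have "(act r ?T0, act r T) \<in> comb_equiv" using act_equiv[OF G tiling_Adom[OF T0(1)]] by blast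
  then show ?thesis unfolding phi_def
    by (rule cls_eq[OF tiling_Adom[OF gen_tiling[OF G T0(1)]]])
qed

lemma phi_in: assumes G: "gen r" and C: "C \<in> rectangulations n" shows "phi n r C \<in> rectangulations n"
  unfolding phi_def rect_eq using gen_tiling[OF G rep(1)[OF C]] by auto

lemma phi_comp:
  assumes Ga: "gen a" and Gb: "gen b" and C: "C \<in> rectangulations n"
  shows "phi n a (phi n b C) = cls (act a (act b (rep n C)))"
  unfolding phi_def[of n b] using phi_cls[OF Ga gen_tiling[OF Gb rep(1)[OF C]]] .

lemma phi_invol: assumes G: "gen r" and C: "C \<in> rectangulations n" shows "phi n r (phi n r C) = C"
  using phi_comp[OF G G C] gen_invol[OF G] rep(2)[OF C] by simp

lemma phi_fix:
  assumes G: "gen r" and C: "C \<in> rectangulations n"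
  shows "phi n r C = C \<longleftrightarrow> (\<forall>T\<in>C. act r T \<in> C)"
proof
  let ?T0 = "rep n C"
  have T0: "is_tiling n ?T0" "C = cls ?T0" using rep[OF C] by auto
  have A0: "?T0 \<in> Adom" using tiling_Adom[OF T0(1)] .
  {
    assume fx: "phi n r C = C"
    show "\<forall>T\<in>C. act r T \<in> C"
    proof
      fix T assume "T \<in> C"
      then have E: "(?T0, T) \<in> comb_equiv" using T0(2) unfolding cls_def by auto
      have E2: "(act r ?T0, act r T) \<in> comb_equiv" using act_equiv[OF G A0 E] .
      have "act r ?T0 \<in> C" using fx cls_mem unfolding phi_def by metis
      then have "(?T0, act r ?T0) \<in> comb_equiv" using T0(2) unfolding cls_def by auto
      then have "(?T0, act r T) \<in> comb_equiv" using equiv_trans[OF A0 _ E2] by blast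
      then show "act r T \<in> C" using T0(2) unfolding cls_def by auto
    qed
  }
  {
    assume "\<forall>T\<in>C. act r T \<in> C"
    then have "act r ?T0 \<in> C" using cls_mem T0(2) by metis
    then have "(?T0, act r ?T0) \<in> comb_equiv" using T0(2) unfolding cls_def by auto
    then have "cls ?T0 = cls (act r ?T0)" using cls_eq[OF A0] by blast
    then show "phi n r C = C" using T0(2) unfolding phi_def by simp
  }
qed

lemma invol_parity:
  assumes "finite Y" "\<And>y. y \<in> Y \<Longrightarrow> f y \<in> Y" "\<And>y. y \<in> Y \<Longrightarrow> f (f y) = y"
  shows "card Y mod 2 = card {y\<in>Y. f y = y} mod 2"
  using assms
proof (induction "card Y" arbitrary: Y rule: less_induct)
  case less
  show ?case
  proof (cases "\<exists>y\<in>Y. f y \<noteq> y")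
    case False
    then have "{y\<in>Y. f y = y} = Y" by auto
    then show ?thesis by simp
  next
    case True
    then obtain y where y: "y \<in> Y" "f y \<noteq> y" by blast
    let ?Y = "Y - {y, f y}"
    have fy: "f y \<in> Y" using less y by blast
    have inv: "\<And>z. z \<in> ?Y \<Longrightarrow> f z \<in> ?Y"
    proof -
      fix z assume z: "z \<in> ?Y"
      have "f z \<in> Y" using less z by blast
      moreover have "f z \<noteq> y" using z less(4)[of z] by auto
      moreover have "f z \<noteq> f y"
      proof
        assume "f z = f y"
        then have "f (f z) = f (f y)" by simp
        then have "z = y" using z less(4)[of z] less(4)[of y] y by simp
        then show False using z by simp
      qed
      ultimately show "f z \<in> ?Y" by blast
    qed
    have cY: "card ?Y = card Y - 2" using y fy less(2) by (simp add: card_Diff_subset)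
    have c2: "card Y \<ge> 2"
    proof -
      have "{y, f y} \<subseteq> Y" using y fy by blast
      then have "card {y, f y} \<le> card Y" using less(2) card_mono by blast
      then show ?thesis using y by simp
    qed
    have IH: "card ?Y mod 2 = card {z\<in>?Y. f z = z} mod 2"
      using less(1)[of ?Y] cY c2 less(2) inv less(4) by auto
    have "{z\<in>?Y. f z = z} = {z\<in>Y. f z = z}" using y less(4)[of y] by auto
    moreover have "card ?Y mod 2 = card Y mod 2" using cY c2
      by (metis add_diff_cancel_right' le_add_diff_inverse2 mod_add_self2)
    ultimately show ?thesis using IH by simp
  qed
qed

lemma three_parity:
  assumes X: "finite X"
    and m1: "\<And>x. x \<in> X \<Longrightarrow> f1 x \<in> X" and i1: "\<And>x. x \<in> X \<Longrightarrow> f1 (f1 x) = x"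
    and m2: "\<And>x. x \<in> X \<Longrightarrow> f2 x \<in> X" and i2: "\<And>x. x \<in> X \<Longrightarrow> f2 (f2 x) = x"
    and m3: "\<And>x. x \<in> X \<Longrightarrow> f3 x \<in> X" and i3: "\<And>x. x \<in> X \<Longrightarrow> f3 (f3 x) = x"
    and c13: "\<And>x. x \<in> X \<Longrightarrow> f1 (f3 x) = f3 (f1 x)"
    and c21: "\<And>x. x \<in> X \<Longrightarrow> f2 (f1 x) = f3 (f2 x)"
  shows "card X mod 2 = card {x\<in>X. f1 x = x \<and> f2 x = x \<and> f3 x = x} mod 2"
proof -
  have a: "card X mod 2 = card {x\<in>X. f1 x = x} mod 2" by (rule invol_parity) (use X m1 i1 in auto)
  have b: "card {x\<in>X. f1 x = x} mod 2 = card {x\<in>{x\<in>X. f1 x = x}. f3 x = x} mod 2"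
    by (rule invol_parity) (use X m3 i3 c13 in auto)
  have c: "card {x\<in>X. f1 x = x \<and> f3 x = x} mod 2 =
      card {x\<in>{x\<in>X. f1 x = x \<and> f3 x = x}. f2 x = x} mod 2"
  proof (rule invol_parity)
    show "finite {x\<in>X. f1 x = x \<and> f3 x = x}" using X by simp
    fix y assume y: "y \<in> {x\<in>X. f1 x = x \<and> f3 x = x}"
    then show "f2 (f2 y) = y" using i2 by auto
    have y2: "f2 y \<in> X" using m2 y by auto
    have "f3 (f2 y) = f2 y" using c21[of y] y by auto
    moreover have "f1 (f2 y) = f2 y"
    proof -
      have "f2 (f1 (f2 y)) = f3 (f2 (f2 y))" using c21[OF y2] .
      also have "\<dots> = y" using y i2 by auto
      finally have "f2 (f2 (f1 (f2 y))) = f2 y" by simp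
      moreover have "f1 (f2 y) \<in> X" using m1 y2 by blast
      ultimately show ?thesis using i2 by simp
    qed
    ultimately show "f2 y \<in> {x\<in>X. f1 x = x \<and> f3 x = x}" using y2 by blast
  qed
  have e1: "{x\<in>{x\<in>X. f1 x = x}. f3 x = x} = {x\<in>X. f1 x = x \<and> f3 x = x}" by auto
  have e2: "{x\<in>{x\<in>X. f1 x = x \<and> f3 x = x}. f2 x = x} = {x\<in>X. f1 x = x \<and> f2 x = x \<and> f3 x = x}" by auto
  show ?thesis using a b c unfolding e1 e2 by simp
qed

lemma D8_gens: "D8 = {\<lambda>p. p, r1, r3, \<lambda>p. r1 (r3 p), r2, \<lambda>p. r1 (r2 p), \<lambda>p. r2 (r1 p), \<lambda>p. r1 (r3 (r2 p))}"
  unfolding D8_def r1_def r2_def r3_def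
  by (intro arg_cong2[where f=insert] refl ext; auto split: prod.splits)

lemma parity_main:
  assumes fin: "finite (rectangulations n)"
  shows "s n mod 2 = t n mod 2"
proof -
  let ?X = "rectangulations n"
  let ?FC = "\<lambda>r C. \<forall>T\<in>C. act r T \<in> C"
  have clos: "?FC (\<lambda>p. a (b p)) C" if "?FC a C" "?FC b C" for a b C
    using that unfolding act_act[symmetric] by blast
  have eqs: "{C \<in> ?X. \<forall>\<sigma>\<in>D8. ?FC \<sigma> C} = {C \<in> ?X. phi n r1 C = C \<and> phi n r2 C = C \<and> phi n r3 C = C}"
  proof -
    have "(\<forall>\<sigma>\<in>D8. ?FC \<sigma> C) \<longleftrightarrow> ?FC r1 C \<and> ?FC r2 C \<and> ?FC r3 C" for C
    proof
      assume asm: "\<forall>\<sigma>\<in>D8. ?FC \<sigma> C"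
      have m1: "r1 \<in> D8" unfolding D8_gens by (intro insertI1 insertI2)
      have m2: "r2 \<in> D8" unfolding D8_gens by (intro insertI1 insertI2)
      have m3: "r3 \<in> D8" unfolding D8_gens by (intro insertI1 insertI2)
      note m = m1 m2 m3
      show "?FC r1 C \<and> ?FC r2 C \<and> ?FC r3 C"
        using bspec[OF asm m(1)] bspec[OF asm m(2)] bspec[OF asm m(3)] by (intro conjI)
    next
      assume a: "?FC r1 C \<and> ?FC r2 C \<and> ?FC r3 C"
      have f0: "?FC (\<lambda>p. p) C" using act_id by simp
      have f1: "?FC r1 C" "?FC r2 C" "?FC r3 C" using a by blast+
      have f13: "?FC (\<lambda>p. r1 (r3 p)) C" by (rule clos) (use a in blast)+
      have f12: "?FC (\<lambda>p. r1 (r2 p)) C" by (rule clos) (use a in blast)+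
      have f21: "?FC (\<lambda>p. r2 (r1 p)) C" by (rule clos) (use a in blast)+
      have f32: "?FC (\<lambda>p. r3 (r2 p)) C" by (rule clos) (use a in blast)+
      have f132: "?FC (\<lambda>p. r1 (r3 (r2 p))) C" by (rule clos[where a=r1 and b="\<lambda>p. r3 (r2 p)"]) (use a f32 in blast)+
      show "\<forall>\<sigma>\<in>D8. ?FC \<sigma> C"
        unfolding D8_gens ball8 ball_empty
        by (intro conjI f0 f1(1) f1(2) f1(3) f13 f12 f21 f32 f132) simp
    qed
    note iff = this
    have *: "(\<forall>\<sigma>\<in>D8. ?FC \<sigma> C) \<longleftrightarrow> (phi n r1 C = C \<and> phi n r2 C = C \<and> phi n r3 C = C)"
      if "C \<in> ?X" for C
      unfolding iff phi_fix[OF gen_r1 that] phi_fix[OF gen_r2 that] phi_fix[OF gen_r3 that] ..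
    show ?thesis
    proof (rule Collect_cong)
      fix C show "(C \<in> ?X \<and> (\<forall>\<sigma>\<in>D8. ?FC \<sigma> C)) = (C \<in> ?X \<and> phi n r1 C = C \<and> phi n r2 C = C \<and> phi n r3 C = C)"
        using *[of C] by (cases "C \<in> ?X") simp_all
    qed
  qed
  have "t n mod 2 = card {C \<in> ?X. phi n r1 C = C \<and> phi n r2 C = C \<and> phi n r3 C = C} mod 2"
    unfolding t_def
  proof (rule three_parity[OF fin])
    fix x assume x: "x \<in> ?X"
    show "phi n r1 x \<in> ?X" "phi n r2 x \<in> ?X" "phi n r3 x \<in> ?X"
      using phi_in[OF gen_r1 x] phi_in[OF gen_r2 x] phi_in[OF gen_r3 x] .
    show "phi n r1 (phi n r1 x) = x" "phi n r2 (phi n r2 x) = x" "phi n r3 (phi n r3 x) = x"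
      using phi_invol[OF gen_r1 x] phi_invol[OF gen_r2 x] phi_invol[OF gen_r3 x] .
    have "(\<lambda>p. r1 (r3 p)) = (\<lambda>p. r3 (r1 p))" by (auto simp: r1_def r3_def)
    then show "phi n r1 (phi n r3 x) = phi n r3 (phi n r1 x)"
      using phi_comp[OF gen_r1 gen_r3 x] phi_comp[OF gen_r3 gen_r1 x] by (simp only: act_act)
    have "(\<lambda>p. r2 (r1 p)) = (\<lambda>p. r3 (r2 p))" by (auto simp: r1_def r2_def r3_def)
    then show "phi n r2 (phi n r1 x) = phi n r3 (phi n r2 x)"
      using phi_comp[OF gen_r2 gen_r1 x] phi_comp[OF gen_r3 gen_r2 x] by (simp only: act_act)
  qed
  then show ?thesis unfolding s_def eqs by simp
qed

fun pl :: "(real \<times> real) list \<Rightarrow> real \<Rightarrow> real" where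
  "pl [] z = z"
| "pl [(x,y)] z = z - x + y"
| "pl ((x0,y0)#(x1,y1)#rest) z =
     (if z \<le> x1 then y0 + (z - x0) * (y1 - y0) / (x1 - x0) else pl ((x1,y1)#rest) z)"

definition incr :: "(real \<times> real) \<Rightarrow> (real \<times> real) \<Rightarrow> bool" where
  "incr p q \<longleftrightarrow> fst p < fst q \<and> snd p < snd q"

lemma pl_step:
  assumes prems: "sorted_wrt incr ((x0,y0)#(x1,y1)#rest)"
    and IH0: "strict_mono (pl ((x1,y1)#rest)) \<and> continuous_on UNIV (pl ((x1,y1)#rest)) \<and>
     (\<forall>(x,y)\<in>set ((x1,y1)#rest). pl ((x1,y1)#rest) x = y)"
  shows "strict_mono (pl ((x0,y0)#(x1,y1)#rest)) \<and> continuous_on UNIV (pl ((x0,y0)#(x1,y1)#rest)) \<and>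
     (\<forall>(x,y)\<in>set ((x0,y0)#(x1,y1)#rest). pl ((x0,y0)#(x1,y1)#rest) x = y)"
proof -
  let ?P = "pl ((x1,y1)#rest)"
  let ?L = "\<lambda>t. y0 + (t - x0) * (y1 - y0) / (x1 - x0)"
  have lt: "x0 < x1" "y0 < y1" using prems by (auto simp: incr_def)
  have IH: "strict_mono ?P" "continuous_on UNIV ?P" "\<forall>(x,y)\<in>set ((x1,y1)#rest). ?P x = y"
    using IH0 by auto
  have P1: "?P x1 = y1" using IH(3) by auto
  have L1: "?L x1 = y1" using lt by (simp add: field_simps)
  have Lmono: "?L t < ?L u" if "t < u" for t u
  proof -
    have "(t - x0) * (y1 - y0) < (u - x0) * (y1 - y0)" using that lt by (simp add: mult_strict_right_mono)
    then show ?thesis using lt by (simp add: divide_strict_right_mono)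
  qed
  have eq: "pl ((x0,y0)#(x1,y1)#rest) = (\<lambda>t. ?L (min t x1) + ?P (max t x1) - y1)"
  proof
    fix t show "pl ((x0,y0)#(x1,y1)#rest) t = ?L (min t x1) + ?P (max t x1) - y1"
      using P1 L1 by (cases "t \<le> x1") (simp_all add: min_def max_def)
  qed
  have sm: "strict_mono (pl ((x0,y0)#(x1,y1)#rest))"
    unfolding strict_mono_def
  proof (intro allI impI)
    fix t u :: real assume tu: "t < u"
    show "pl ((x0,y0)#(x1,y1)#rest) t < pl ((x0,y0)#(x1,y1)#rest) u"
    proof (cases "u \<le> x1")
      case True then show ?thesis using tu Lmono by simp
    next
      case False
      then have u: "x1 < u" by simp
      show ?thesis
      proof (cases "t \<le> x1")
        case True
        have "?L t \<le> ?L x1" using Lmono[of t x1] True by (cases "t = x1") auto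
        also have "\<dots> = ?P x1" using L1 P1 by simp
        also have "\<dots> < ?P u" using IH(1) u unfolding strict_mono_def by blast
        finally show ?thesis using True u by simp
      next
        case False
        then show ?thesis using u tu IH(1) unfolding strict_mono_def by simp
      qed
    qed
  qed
  have ct: "continuous_on UNIV (pl ((x0,y0)#(x1,y1)#rest))"
  proof -
    have cP: "continuous_on UNIV (\<lambda>t. ?P (max t x1))"
      by (rule continuous_on_compose2[OF IH(2)]) (auto intro: continuous_intros)
    have cL: "continuous_on UNIV (\<lambda>t. ?L (min t x1))"
      by (intro continuous_intros) (use lt in auto)
    have "continuous_on UNIV (\<lambda>t. ?L (min t x1) + ?P (max t x1) - y1)"
      by (intro continuous_on_diff continuous_on_add cL cP continuous_on_const)
    then show ?thesis using eq by simp
  qed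
  have vals: "\<forall>(x,y)\<in>set ((x0,y0)#(x1,y1)#rest). pl ((x0,y0)#(x1,y1)#rest) x = y"
  proof
    fix p assume p: "p \<in> set ((x0,y0)#(x1,y1)#rest)"
    obtain x y where xy: "p = (x,y)" by fastforce
    have "pl ((x0,y0)#(x1,y1)#rest) x = y"
    proof (cases "p = (x0,y0)")
      case True then show ?thesis using xy lt by simp
    next
      case False
      then have pin: "(x,y) \<in> set ((x1,y1)#rest)" using p xy by auto
      have "x1 \<le> x"
      proof (cases "(x,y) = (x1,y1)")
        case False
        then have "(x,y) \<in> set rest" using pin by auto
        then have "incr (x1,y1) (x,y)" using prems by simp
        then show ?thesis by (simp add: incr_def)
      qed simp
      show ?thesis
      proof (cases "x = x1")
        case True
        then have "y = y1"
        proof (cases "(x,y) = (x1,y1)")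
          case False
          then have "(x,y) \<in> set rest" using pin by auto
          then have "incr (x1,y1) (x,y)" using prems by simp
          then show ?thesis using True by (simp add: incr_def)
        qed simp
        then show ?thesis using True L1 by simp
      next
        case False
        then show ?thesis using \<open>x1 \<le> x\<close> IH(3) pin by auto
      qed
    qed
    then show "case p of (x, y) \<Rightarrow> pl ((x0, y0) # (x1, y1) # rest) x = y" using xy by simp
  qed
  show ?thesis using sm ct vals by blast
qed

lemma pl_props:
  "sorted_wrt incr ps \<Longrightarrow> strict_mono (pl ps) \<and> continuous_on UNIV (pl ps) \<and>
     (\<forall>(x,y)\<in>set ps. pl ps x = y)"
proof (induction ps rule: induct_list012)
  case 1
  then show ?case by (simp add: strict_mono_def continuous_on_id)
next
  case (2 p)
  obtain x y where p: "p = (x,y)" by fastforce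
  have "continuous_on UNIV (\<lambda>t. t - x + y)" by (intro continuous_intros)
  then show ?case using p by (simp add: strict_mono_def)
next
  case (3 p q rest)
  obtain x0 y0 where p: "p = (x0,y0)" by fastforce
  obtain x1 y1 where q: "q = (x1,y1)" by fastforce
  have s: "sorted_wrt incr (q # rest)" using "3.prems" by simp
  have IHq: "strict_mono (pl ((x1,y1)#rest)) \<and> continuous_on UNIV (pl ((x1,y1)#rest)) \<and>
     (\<forall>(x,y)\<in>set ((x1,y1)#rest). pl ((x1,y1)#rest) x = y)" using "3.IH"(2)[OF s] q by simp
  have s0: "sorted_wrt incr ((x0,y0)#(x1,y1)#rest)" using "3.prems" p q by simp
  show ?case unfolding p q by (rule pl_step[OF s0 IHq])
qed

definition good :: "(real \<Rightarrow> real) \<Rightarrow> bool" where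
  "good a \<longleftrightarrow> continuous_on UNIV a \<and> strict_mono a \<and> a 0 = 0 \<and> a 1 = 1"

definition grid :: "nat \<Rightarrow> real set" where
  "grid N = {real j / real m | j m. m \<le> N \<and> j \<le> m}"

lemma finite_grid: "finite (grid N)"
proof -
  have "grid N \<subseteq> (\<lambda>(j,m). real j / real m) ` ({..N} \<times> {..N})"
    unfolding grid_def by auto
  then show ?thesis by (rule finite_subset) auto
qed

lemma sw: "sorted_wrt (<) xs \<Longrightarrow> i < j \<Longrightarrow> j < length xs \<Longrightarrow> xs ! i < xs ! j"
  by (simp add: sorted_wrt_iff_nth_less)

lemma interp:
  assumes fin: "finite X" and sub: "X \<subseteq> {0..1}" and z: "0 \<in> X" and o: "1 \<in> X"
  shows "\<exists>a. good a \<and> a ` X \<subseteq> grid (card X - 1)"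
proof -
  define xs where "xs = sorted_list_of_set X"
  define k where "k = card X"
  have xs: "sorted_wrt (<) xs" "set xs = X" "length xs = k"
    unfolding xs_def k_def using fin
    by (auto simp: strict_sorted_list_of_set set_sorted_list_of_set length_sorted_list_of_set)
  have k2: "k \<ge> 2"
  proof -
    have "{0, 1} \<subseteq> X" using z o by simp
    then have "card {0::real, 1} \<le> k" unfolding k_def using fin card_mono by blast
    then show ?thesis by simp
  qed
  define ys where "ys = map (\<lambda>j. real j / real (k - 1)) [0..<k]"
  have ysl: "length ys = k" unfolding ys_def by simp
  have ysn: "ys ! i = real i / real (k - 1)" if "i < k" for i using that unfolding ys_def by simp
  have km: "real (k - 1) > 0" using k2 by simp
  define ps where "ps = zip xs ys"
  have ps_sorted: "sorted_wrt incr ps"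
    unfolding sorted_wrt_iff_nth_less ps_def
  proof (intro allI impI)
    fix i j assume ij: "i < j" "j < length (zip xs ys)"
    then have jk: "j < k" using xs ysl by simp
    have "xs ! i < xs ! j" using xs(1) ij jk xs(3) unfolding sorted_wrt_iff_nth_less by blast
    moreover have "ys ! i < ys ! j" using ysn[of i] ysn[of j] ij jk km
      by (simp add: divide_strict_right_mono)
    ultimately show "incr (zip xs ys ! i) (zip xs ys ! j)"
      using ij jk xs(3) ysl by (simp add: incr_def)
  qed
  define a where "a = pl ps"
  have P: "strict_mono a" "continuous_on UNIV a" "\<forall>(x,y)\<in>set ps. a x = y"
    using pl_props[OF ps_sorted] unfolding a_def by auto
  have val: "a (xs ! i) = real i / real (k - 1)" if "i < k" for i
  proof -
    have "(xs ! i, ys ! i) \<in> set ps" unfolding ps_def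
      using that xs(3) ysl by (metis in_set_zip fst_conv snd_conv)
    then show ?thesis using P(3) ysn that by auto
  qed
  have a0: "a 0 = 0"
  proof -
    obtain i where i: "i < k" "xs ! i = 0" using z xs by (metis in_set_conv_nth)
    have "i = 0"
    proof (rule ccontr)
      assume "i \<noteq> 0"
      then have "xs ! 0 < xs ! i" using sw[OF xs(1), of 0 i] i xs(3) by auto
      moreover have "xs ! 0 \<in> X" using xs i by (metis gr_zeroI not_less0 nth_mem)
      ultimately show False using sub i by auto
    qed
    then show ?thesis using val[of 0] i by simp
  qed
  have a1: "a 1 = 1"
  proof -
    obtain i where i: "i < k" "xs ! i = 1" using o xs by (metis in_set_conv_nth)
    have "i = k - 1"
    proof (rule ccontr)
      assume "i \<noteq> k - 1"
      then have "xs ! i < xs ! (k - 1)" using sw[OF xs(1), of i "k - 1"] i xs(3) k2 by auto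
      moreover have "xs ! (k - 1) \<in> X" using xs i k2 by (metis diff_less nth_mem zero_less_numeral less_le_trans zero_less_one)
      ultimately show False using sub i by auto
    qed
    then show ?thesis using val[of "k - 1"] i km by simp
  qed
  have "a ` X \<subseteq> grid (card X - 1)"
  proof
    fix y assume "y \<in> a ` X"
    then obtain x where x: "x \<in> X" "y = a x" by blast
    obtain i where i: "i < k" "xs ! i = x" using x(1) xs by (metis in_set_conv_nth)
    have "y = real i / real (k - 1)" using val[OF i(1)] i(2) x(2) by simp
    moreover have "k - 1 \<le> card X - 1" "i \<le> k - 1" using i k_def by auto
    ultimately show "y \<in> grid (card X - 1)" unfolding grid_def by blast
  qed
  then show ?thesis using P a0 a1 unfolding good_def by blast
qed

lemma good_img:
  assumes G: "good a" and pq: "p \<le> q"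
  shows "a ` {p..q} = {a p..a q}"
proof
  have sm: "strict_mono a" using G by (simp add: good_def)
  show "a ` {p..q} \<subseteq> {a p..a q}" using sm by (auto simp: strict_mono_less_eq)
  show "{a p..a q} \<subseteq> a ` {p..q}"
  proof
    fix y assume y: "y \<in> {a p..a q}"
    have c: "continuous_on {p..q} a" using G continuous_on_subset unfolding good_def by blast
    obtain x where "p \<le> x" "x \<le> q" "a x = y" using IVT'[of a p y q, OF _ _ pq c] y by auto
    then show "y \<in> a ` {p..q}" by auto
  qed
qed

lemma good_sq: "good a \<Longrightarrow> a ` {0..1} = {0..1}"
  using good_img[of a 0 1] by (simp add: good_def)

lemma good_lt: "good a \<Longrightarrow> a x < a y \<longleftrightarrow> x < y"
  by (simp add: good_def strict_mono_less)

lemma pm_rect: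
  assumes "good a" "good b" "p \<le> q" "c \<le> d"
  shows "map_prod a b ` ({p..q} \<times> {c..d}) = {a p..a q} \<times> {b c..b d}"
  by (rule map_prod_surj_on) (use good_img assms in auto)

lemma pm_hseg: "good a \<Longrightarrow> good b \<Longrightarrow> hseg S \<Longrightarrow> hseg (map_prod a b ` S)"
  by (erule hsegE) (simp add: pm_rect[where c=y and d=y for y, simplified] hsegI good_lt)
lemma pm_vseg: "good a \<Longrightarrow> good b \<Longrightarrow> vseg S \<Longrightarrow> vseg (map_prod a b ` S)"
  by (erule vsegE) (simp add: pm_rect[where p=x and q=x for x, simplified] vsegI good_lt)

lemma pm_isrect: "good a \<Longrightarrow> good b \<Longrightarrow> is_rect R \<Longrightarrow> is_rect (map_prod a b ` R)"
  unfolding is_rect_def[of R] by (auto simp: pm_rect good_lt intro!: is_rectI)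

lemma pm_homeo:
  assumes A: "good a" and B: "good b"
  shows "\<exists>g. homeomorphism unit_sq unit_sq (map_prod a b) g"
proof (rule homeomorphism_compact)
  show "compact unit_sq" unfolding sq_eq by (intro compact_Times compact_Icc)
  have ca: "continuous_on UNIV a" and cb: "continuous_on UNIV b" using A B by (auto simp: good_def)
  have eq: "map_prod a b = (\<lambda>x. (a (fst x), b (snd x)))" by (rule ext) (simp add: map_prod_def split_beta)
  have "continuous_on UNIV (\<lambda>x::pt. (a (fst x), b (snd x)))"
    by (intro continuous_on_Pair continuous_on_compose2[OF ca] continuous_on_compose2[OF cb]
        continuous_intros) auto
  then show "continuous_on unit_sq (map_prod a b)" unfolding eq using continuous_on_subset by blast
  show "map_prod a b ` unit_sq = unit_sq" unfolding sq_eq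
    by (rule map_prod_surj_on) (use good_sq A B in auto)
  have "inj a" "inj b" using A B by (auto simp: good_def strict_mono_imp_inj_on)
  then show "inj_on (map_prod a b) unit_sq" unfolding sq_eq
    by (intro map_prod_inj_on) (auto intro: inj_on_subset)
qed

lemma skel_sq: "T \<in> Adom \<Longrightarrow> skel T \<subseteq> unit_sq"
  unfolding skel_def Adom_def using frontier_subset_closed compact_imp_closed by blast

lemma good_surj: "good a \<Longrightarrow> y \<in> {0..1} \<Longrightarrow> \<exists>x\<in>{0..1}. a x = y"
  using good_sq by (metis imageE)

lemma img_id: "(\<And>x. x \<in> A \<Longrightarrow> f x = x) \<Longrightarrow> f ` A = A"
  by (metis image_cong image_ident)

lemma inv_hseg:
  assumes A: "good a" and B: "good b" and H: "homeomorphism unit_sq unit_sq (map_prod a b) g"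
    and S: "S \<subseteq> unit_sq" "hseg S"
  shows "hseg (g ` S)"
proof -
  obtain p q y where pq: "p < q" "S = {p..q} \<times> {y}" using S(2) by (rule hsegE)
  have "(p,y) \<in> S" "(q,y) \<in> S" using pq by auto
  then have r: "p \<in> {0..1}" "q \<in> {0..1}" "y \<in> {0..1}" using S(1) unfolding sq_eq by auto
  obtain p' where p': "p' \<in> {0..1}" "a p' = p" using good_surj[OF A r(1)] by blast
  obtain q' where q': "q' \<in> {0..1}" "a q' = q" using good_surj[OF A r(2)] by blast
  obtain y' where y': "y' \<in> {0..1}" "b y' = y" using good_surj[OF B r(3)] by blast
  have lt: "p' < q'" using pq(1) p' q' good_lt[OF A] by metis
  have S0: "map_prod a b ` ({p'..q'} \<times> {y'}) = S"
    using pm_rect[OF A B, of p' q' y' y'] lt p' q' y' pq by simp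
  have sub: "{p'..q'} \<times> {y'} \<subseteq> unit_sq" using p' q' y' unfolding sq_eq by auto
  let ?A = "{p'..q'} \<times> {y'}"
  have "g ` S = {p'..q'} \<times> {y'}"
  proof -
    have "\<forall>x\<in>unit_sq. g (map_prod a b x) = x" using H unfolding homeomorphism_def by blast
    then have "\<forall>x\<in>?A. g (map_prod a b x) = x" using sub by blast
    then have *: "\<And>z. z \<in> ?A \<Longrightarrow> (g \<circ> map_prod a b) z = z" by auto
    show ?thesis unfolding S0[symmetric] image_comp by (rule img_id) (rule *)
  qed
  then show ?thesis using lt by (simp add: hsegI)
qed

lemma inv_vseg:
  assumes A: "good a" and B: "good b" and H: "homeomorphism unit_sq unit_sq (map_prod a b) g"
    and S: "S \<subseteq> unit_sq" "vseg S"
  shows "vseg (g ` S)"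
proof -
  obtain x c d where pq: "c < d" "S = {x} \<times> {c..d}" using S(2) by (rule vsegE)
  have "(x,c) \<in> S" "(x,d) \<in> S" using pq by auto
  then have r: "c \<in> {0..1}" "d \<in> {0..1}" "x \<in> {0..1}" using S(1) unfolding sq_eq by auto
  obtain c' where c': "c' \<in> {0..1}" "b c' = c" using good_surj[OF B r(1)] by blast
  obtain d' where d': "d' \<in> {0..1}" "b d' = d" using good_surj[OF B r(2)] by blast
  obtain x' where x': "x' \<in> {0..1}" "a x' = x" using good_surj[OF A r(3)] by blast
  have lt: "c' < d'" using pq(1) c' d' good_lt[OF B] by metis
  have S0: "map_prod a b ` ({x'} \<times> {c'..d'}) = S"
    using pm_rect[OF A B, of x' x' c' d'] lt c' d' x' pq by simp
  have sub: "{x'} \<times> {c'..d'} \<subseteq> unit_sq" using c' d' x' unfolding sq_eq by auto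
  let ?A = "{x'} \<times> {c'..d'}"
  have "g ` S = {x'} \<times> {c'..d'}"
  proof -
    have "\<forall>z\<in>unit_sq. g (map_prod a b z) = z" using H unfolding homeomorphism_def by blast
    then have "\<forall>z\<in>?A. g (map_prod a b z) = z" using sub by blast
    then have *: "\<And>z. z \<in> ?A \<Longrightarrow> (g \<circ> map_prod a b) z = z" by auto
    show ?thesis unfolding S0[symmetric] image_comp by (rule img_id) (rule *)
  qed
  then show ?thesis using lt by (simp add: vsegI)
qed

lemma pm_equiv:
  assumes A: "good a" and B: "good b" and T: "is_tiling n T"
  shows "(T, act (map_prod a b) T) \<in> comb_equiv"
proof -
  obtain g where H: "homeomorphism unit_sq unit_sq (map_prod a b) g" using pm_homeo[OF A B] by blast
  have TA: "T \<in> Adom" using tiling_Adom[OF T] .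
  have sk: "skel (act (map_prod a b) T) \<subseteq> unit_sq"
    using skel_sq[OF act_Adom[OF H TA]] .
  show ?thesis
  proof (rule comb_equivI[OF H])
    show "\<forall>p\<in>corners. map_prod a b p = p" using A B by (auto simp: corners_def good_def)
    show "act (map_prod a b) T = act (map_prod a b) T" ..
    show "preserves_HV (map_prod a b) (skel T)"
      unfolding preserves_HV_def using pm_hseg[OF A B] pm_vseg[OF A B] by blast
    show "preserves_HV g (skel (act (map_prod a b) T))"
      unfolding preserves_HV_def using inv_hseg[OF A B H] inv_vseg[OF A B H] sk by blast
  qed
qed

definition xco :: "pt set set \<Rightarrow> real set" where
  "xco T = {0,1} \<union> (\<Union>R\<in>T. {Inf (fst ` R), Sup (fst ` R)})"
definition yco :: "pt set set \<Rightarrow> real set" where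
  "yco T = {0,1} \<union> (\<Union>R\<in>T. {Inf (snd ` R), Sup (snd ` R)})"

lemma rect_decomp:
  assumes T: "is_tiling n T" and R: "R \<in> T"
  shows "\<exists>p q c d. p < q \<and> c < d \<and> R = {p..q} \<times> {c..d} \<and>
     p \<in> xco T \<and> q \<in> xco T \<and> c \<in> yco T \<and> d \<in> yco T"
proof -
  have "is_rect R" using T R by (simp add: is_tiling_def)
  then obtain p q c d where r: "p < q" "c < d" "R = {p..q} \<times> {c..d}"
    unfolding is_rect_def by blast
  have f: "fst ` R = {p..q}" "snd ` R = {c..d}" using r by simp_all
  have e: "Inf (fst ` R) = p" "Sup (fst ` R) = q" "Inf (snd ` R) = c" "Sup (snd ` R) = d"
    unfolding f using r(1,2) by simp_all
  have m: "Inf (fst ` R) \<in> xco T" "Sup (fst ` R) \<in> xco T" "Inf (snd ` R) \<in> yco T" "Sup (snd ` R) \<in> yco T"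
    unfolding xco_def yco_def by (rule UnI2, rule UN_I[OF R], simp)+
  have "p < q \<and> c < d \<and> R = {p..q} \<times> {c..d} \<and> p \<in> xco T \<and> q \<in> xco T \<and> c \<in> yco T \<and> d \<in> yco T"
    by (intro conjI r(1) r(2) r(3) m[unfolded e])
  then show ?thesis by (intro exI)
qed

lemma co_sub:
  assumes T: "is_tiling n T"
  shows "xco T \<subseteq> {0..1}" "yco T \<subseteq> {0..1}"
proof -
  have *: "p \<in> {0..1} \<and> q \<in> {0..1} \<and> c \<in> {0..1} \<and> d \<in> {0..1}"
    if "R \<in> T" "p < q" "c < d" "R = {p..q} \<times> {c..d}" for R p q c d
  proof -
    have "(p,c) \<in> R" "(q,d) \<in> R" using that by auto
    then show ?thesis using rect_sq[OF T that(1)] unfolding sq_eq by auto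
  qed
  have "Inf (fst ` R) \<in> {0..1} \<and> Sup (fst ` R) \<in> {0..1} \<and> Inf (snd ` R) \<in> {0..1} \<and> Sup (snd ` R) \<in> {0..1}"
    if R: "R \<in> T" for R
  proof -
    have "is_rect R" using T R by (simp add: is_tiling_def)
    then obtain p q c d where r: "p < q" "c < d" "R = {p..q} \<times> {c..d}"
      unfolding is_rect_def by blast
    have f: "fst ` R = {p..q}" "snd ` R = {c..d}" using r by simp_all
    have e: "Inf (fst ` R) = p" "Sup (fst ` R) = q" "Inf (snd ` R) = c" "Sup (snd ` R) = d"
      unfolding f using r(1,2) by simp_all
    show ?thesis unfolding e using *[OF R r] by blast
  qed
  then show "xco T \<subseteq> {0..1}" "yco T \<subseteq> {0..1}" unfolding xco_def yco_def by auto
qed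

lemma card2: "card {x, y} \<le> 2" by (cases "x = y") auto

lemma co_card:
  assumes T: "is_tiling n T"
  shows "finite (xco T)" "card (xco T) \<le> 2 * n + 2" "finite (yco T)" "card (yco T) \<le> 2 * n + 2"
proof -
  have fin: "finite T" "card T = n" using T unfolding is_tiling_def by auto
  show "finite (xco T)" "finite (yco T)" unfolding xco_def yco_def using fin by auto
  have b: "card (\<Union>R\<in>T. {f R, g R}) \<le> 2 * n" for f g :: "pt set \<Rightarrow> real"
  proof -
    have "card (\<Union>R\<in>T. {f R, g R}) \<le> (\<Sum>R\<in>T. card {f R, g R})" by (rule card_UN_le[OF fin(1)])
    also have "\<dots> \<le> of_nat (card T) * 2" by (rule sum_bounded_above) (rule card2)
    finally show ?thesis using fin by simp
  qed
  have c: "card ({0::real,1} \<union> U) \<le> 2 + card U" for U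
    using card_Un_le[of "{0::real,1}" U] card2[of "0::real" 1] by linarith
  have "card (xco T) \<le> 2 + card (\<Union>R\<in>T. {Inf (fst ` R), Sup (fst ` R)})"
    unfolding xco_def by (rule c)
  then show "card (xco T) \<le> 2 * n + 2" using b[of "\<lambda>R. Inf (fst ` R)" "\<lambda>R. Sup (fst ` R)"] by linarith
  have "card (yco T) \<le> 2 + card (\<Union>R\<in>T. {Inf (snd ` R), Sup (snd ` R)})"
    unfolding yco_def by (rule c)
  then show "card (yco T) \<le> 2 * n + 2" using b[of "\<lambda>R. Inf (snd ` R)" "\<lambda>R. Sup (snd ` R)"] by linarith
qed

lemma grid_mono: assumes "M \<le> N" shows "grid M \<subseteq> grid N"
proof
  fix x assume "x \<in> grid M"
  then obtain j m where "x = real j / real m" "m \<le> M" "j \<le> m" unfolding grid_def by blast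
  then have "x = real j / real m \<and> m \<le> N \<and> j \<le> m" using assms by simp
  then show "x \<in> grid N" unfolding grid_def by blast
qed

lemma finite_rect: "finite (rectangulations n)"
proof -
  define G where "G = grid (2 * n + 1)"
  define Rs where "Rs = (\<lambda>(u,v,w,z). {u..v} \<times> {w..z}) ` (G \<times> G \<times> G \<times> G)"
  have "finite (G \<times> G \<times> G \<times> G)" unfolding G_def using finite_grid by (intro finite_cartesian_product)
  then have fRs: "finite Rs" unfolding Rs_def by (rule finite_imageI)
  have "rectangulations n \<subseteq> cls ` Pow Rs"
  proof
    fix C assume "C \<in> rectangulations n"
    then obtain T where T: "is_tiling n T" "C = cls T" using rect_eq by auto
    have xs: "finite (xco T)" "xco T \<subseteq> {0..1}" "0 \<in> xco T" "1 \<in> xco T"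
      using co_card[OF T(1)] co_sub[OF T(1)] by (auto simp: xco_def)
    have ys: "finite (yco T)" "yco T \<subseteq> {0..1}" "0 \<in> yco T" "1 \<in> yco T"
      using co_card[OF T(1)] co_sub[OF T(1)] by (auto simp: yco_def)
    obtain a where a: "good a" "a ` xco T \<subseteq> grid (card (xco T) - 1)" using interp[OF xs] by blast
    obtain b where b: "good b" "b ` yco T \<subseteq> grid (card (yco T) - 1)" using interp[OF ys] by blast
    have cx: "card (xco T) - 1 \<le> 2 * n + 1" "card (yco T) - 1 \<le> 2 * n + 1" using co_card[OF T(1)] by auto
    have aG: "a ` xco T \<subseteq> G" using a(2) grid_mono[OF cx(1)] unfolding G_def by (rule order_trans)
    have bG: "b ` yco T \<subseteq> G" using b(2) grid_mono[OF cx(2)] unfolding G_def by (rule order_trans)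
    let ?T' = "act (map_prod a b) T"
    have E: "(T, ?T') \<in> comb_equiv" using pm_equiv[OF a(1) b(1) T(1)] .
    have "C = cls ?T'" using cls_eq[OF tiling_Adom[OF T(1)] E] T(2) by simp
    moreover have "?T' \<subseteq> Rs"
    proof
      fix R' assume "R' \<in> ?T'"
      then obtain R where R: "R \<in> T" "R' = map_prod a b ` R" unfolding act_def by blast
      obtain p q c d where r: "p < q" "c < d" "R = {p..q} \<times> {c..d}"
          "p \<in> xco T" "q \<in> xco T" "c \<in> yco T" "d \<in> yco T"
        using rect_decomp[OF T(1) R(1)] by blast
      have "R' = {a p..a q} \<times> {b c..b d}" using R(2) r pm_rect[OF a(1) b(1)] by simp
      moreover have "(a p, a q, b c, b d) \<in> G \<times> G \<times> G \<times> G" using aG bG r by auto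
      ultimately show "R' \<in> Rs" unfolding Rs_def by (auto intro!: rev_image_eqI[where x="(a p, a q, b c, b d)"])
    qed
    ultimately show "C \<in> cls ` Pow Rs" by blast
  qed
  moreover have "finite (cls ` Pow Rs)" using fRs by simp
  ultimately show ?thesis by (rule finite_subset)
qed

theorem lemma9:
  fixes n :: nat
  assumes "n \<ge> 1"
  shows "s n mod 2 = t n mod 2"
  using parity_main[OF finite_rect] .

end
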